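(* Let $a,d\in\mathbb N$, $\mu\in\mathbb R$, $\delta=\mu\sigma_d$, and let $\chi$ be a dominant weight with $\chi+\rho+\delta\in\mathbf V^a(1,d)$; let $e=e(\chi)$. Then for every $1\le l\le d$ we have $p_l(\chi)\ge p(\chi)$, and the inequality is strict if $l>e$.
   Context: $M(d)$: character lattice of the diagonal torus of $GL(d)$ with coordinate characters $\beta_i$; dominant means $c_1\le\dots\le c_d$ for $\sum c_i\beta_i$; $\rho=\frac12\sum_{j<i}(\beta_i-\beta_j)$, $\sigma_d=\sum\beta_i$; $\mathbf V^a(1,d)=\frac32\mathrm{sum}[0,\beta_i-\beta_j]+\frac a2\mathrm{sum}[-\beta_k,\beta_k]+\mathrm{sum}[-\beta_k,0]$ (Minkowski sums over all $i,j,k$). For such $\chi$, $\chi+\rho+\delta$ is strictly dominant and lies in $\mathbf V^a(1,d)$, and $e(\chi)$ is the unique $0\le e\le d$ such that $\chi+\rho+\delta=\sum_{j<i\le e}c_{ij}(\beta_i-\beta_j)+\sum_{e<j<i}c_{ij}(\beta_i-\beta_j)+\sum_{j\le e<i}\frac32(\beta_i-\beta_j)+\sum_ic_i\beta_i$ with $0\le c_{ij}\le\frac32$, $-\frac{a+2}2\le c_i\le-\frac a2$ for $i\le e$, $-\frac a2<c_i\le\frac a2$ for $i>e$. For a weight $\psi$ and $1\le l\le d$, writing $\psi+\rho+\delta=\sum b_i\beta_i$, put $p_l(\psi):=\sum_{i\le l}b_i+\frac32l(d-l)+\frac a2l$, and $p(\chi):=p_{e(\chi)}(\chi)$ (which equals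 $\sum_{i\le e}(c_i+\frac a2)\le0$). *)

theory Defs
  imports Main "HOL.Real"
begin

text \<open>Weights of the diagonal torus of GL(d) are represented by their coefficient
functions w.r.t. the coordinate characters beta_1..beta_d: a weight in M(d) is
chi :: nat => int, where chi k is the coefficient of beta_k (only k in 1..d matter).
Real vectors in M(d) tensor R are functions nat => real on indices 1..d.\<close>

definition dominant :: "nat \<Rightarrow> (nat \<Rightarrow> int) \<Rightarrow> bool" where
  "dominant d chi \<longleftrightarrow> (\<forall>i j. 1 \<le> i \<longrightarrow> i \<le> j \<longrightarrow> j \<le> d \<longrightarrow> chi i \<le> chi j)"

text \<open>Coefficients of chi + rho + delta, where rho = 1/2 sum_{j<i}(beta_i - beta_j)
(coefficient of beta_k is (2k-d-1)/2) and delta = mu * sigma_d.\<close>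
definition shifted :: "nat \<Rightarrow> real \<Rightarrow> (nat \<Rightarrow> int) \<Rightarrow> nat \<Rightarrow> real" where
  "shifted d mu chi k = real_of_int (chi k) + (2 * real k - real d - 1) / 2 + mu"

text \<open>Membership in the Minkowski sum
 V^a(1,d) = 3/2 sum[0, beta_i - beta_j] + a/2 sum[-beta_k, beta_k] + sum[-beta_k, 0].\<close>
definition in_V :: "nat \<Rightarrow> nat \<Rightarrow> (nat \<Rightarrow> real) \<Rightarrow> bool" where
  "in_V a d v \<longleftrightarrow> (\<exists>t s r :: _ \<Rightarrow> real.
     (\<forall>i\<in>{1..d}. \<forall>j\<in>{1..d}. 0 \<le> t i j \<and> t i j \<le> 3/2) \<and>
     (\<forall>k\<in>{1..d}. - (real a / 2) \<le> s k \<and> s k \<le> real a / 2 \<and> -1 \<le> r k \<and> r k \<le> 0) \<and>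
     (\<forall>m\<in>{1..d}. v m = (\<Sum>j=1..d. t m j) - (\<Sum>i=1..d. t i m) + s m + r m))"

text \<open>The decomposition defining e(chi): v = sum_{j<i<=e} c_ij(beta_i-beta_j)
 + sum_{e<j<i} c_ij(beta_i-beta_j) + sum_{j<=e<i} 3/2(beta_i-beta_j) + sum_i c_i beta_i.\<close>
definition e_decomp :: "nat \<Rightarrow> nat \<Rightarrow> (nat \<Rightarrow> real) \<Rightarrow> nat \<Rightarrow> bool" where
  "e_decomp a d v e \<longleftrightarrow> (\<exists>(cc :: nat \<Rightarrow> nat \<Rightarrow> real) (c :: nat \<Rightarrow> real).
     (\<forall>i j. 1 \<le> j \<longrightarrow> j < i \<longrightarrow> i \<le> d \<longrightarrow> 0 \<le> cc i j \<and> cc i j \<le> 3/2) \<and>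
     (\<forall>i\<in>{1..d}. (i \<le> e \<longrightarrow> - ((real a + 2) / 2) \<le> c i \<and> c i \<le> - (real a / 2)) \<and>
                 (e < i \<longrightarrow> - (real a / 2) < c i \<and> c i \<le> real a / 2)) \<and>
     (\<forall>m\<in>{1..d}. v m =
        (\<Sum>j\<in>{1..<m}. if (m \<le> e) = (j \<le> e) then cc m j else 0)
      - (\<Sum>i\<in>{m<..d}. if (m \<le> e) = (i \<le> e) then cc i m else 0)
      + (if m \<le> e then - (3/2) * (real d - real e) else (3/2) * real e)
      + c m))"

definition e_of :: "nat \<Rightarrow> nat \<Rightarrow> real \<Rightarrow> (nat \<Rightarrow> int) \<Rightarrow> nat" where
  "e_of a d mu chi = (THE e. e \<le> d \<and> e_decomp a d (shifted d mu chi) e)"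

definition p_l :: "nat \<Rightarrow> nat \<Rightarrow> real \<Rightarrow> (nat \<Rightarrow> int) \<Rightarrow> nat \<Rightarrow> real" where
  "p_l a d mu psi l = (\<Sum>i=1..l. shifted d mu psi i)
     + (3/2) * real l * (real d - real l) + (real a / 2) * real l"

definition p_chi :: "nat \<Rightarrow> nat \<Rightarrow> real \<Rightarrow> (nat \<Rightarrow> int) \<Rightarrow> real" where
  "p_chi a d mu chi = p_l a d mu chi (e_of a d mu chi)"

end

theory Submission
  imports Defs
begin

lemma split1:
  fixes f :: "nat \<Rightarrow> real"
  assumes "p \<le> k" "k \<le> q"
  shows "sum f {p<..q} = sum f {p<..k} + sum f {k<..q}"
proof -
  have "{p<..q} = {p<..k} \<union> {k<..q}" using assms by auto
  moreover have "{p<..k} \<inter> {k<..q} = {}" by auto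
  ultimately show ?thesis by (simp add: sum.union_disjoint)
qed

lemma split2:
  fixes f :: "nat \<Rightarrow> real"
  assumes "p \<le> k" "k < m"
  shows "sum f {p<..<m} = sum f {p<..k} + sum f {k<..<m}"
proof -
  have "{p<..<m} = {p<..k} \<union> {k<..<m}" using assms by auto
  moreover have "{p<..k} \<inter> {k<..<m} = {}" by auto
  ultimately show ?thesis by (simp add: sum.union_disjoint)
qed

lemma constsum:
  assumes "p \<le> k"
  shows "(\<Sum>m\<in>{p<..k}. (c::real)) = c * (real k - real p)"
  using assms by (simp add: of_nat_diff)

lemma zon:
  fixes c :: real and x :: "nat \<Rightarrow> real"
  assumes "p \<le> q" "c \<ge> 0"
    and "\<forall>i j. p < i \<longrightarrow> i \<le> j \<longrightarrow> j \<le> q \<longrightarrow> x i \<le> x j"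
    and "(\<Sum>m\<in>{p<..q}. x m) = 0"
    and "\<forall>k. p \<le> k \<longrightarrow> k \<le> q \<longrightarrow> (\<Sum>m\<in>{p<..k}. x m) \<ge> - c * (real k - real p) * (real q - real k)"
  shows "\<exists>z. (\<forall>i j. p < j \<longrightarrow> j < i \<longrightarrow> i \<le> q \<longrightarrow> 0 \<le> z i j \<and> z i j \<le> c) \<and>
     (\<forall>m\<in>{p<..q}. x m = (\<Sum>j\<in>{p<..<m}. z m j) - (\<Sum>i\<in>{m<..q}. z i m))"
  using assms
proof (induction "q - p" arbitrary: p q x rule: less_induct)
  case (less p q x)
  note sorted = less.prems(3) and sum0 = less.prems(4) and pre = less.prems(5)
  define P where "P k = (\<Sum>m\<in>{p<..k}. x m)" for k
  show ?case
  proof (cases "\<forall>m\<in>{p<..q}. x m = 0")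
    case True
    then show ?thesis using \<open>c \<ge> 0\<close> by (intro exI[of _ "\<lambda>i j. 0"]) auto
  next
    case False
    then obtain m0 where m0: "m0 \<in> {p<..q}" "x m0 \<noteq> 0" by auto
    have xp1: "x (Suc p) < 0"
    proof (rule ccontr)
      assume "\<not> x (Suc p) < 0"
      have nn: "\<forall>m\<in>{p<..q}. 0 \<le> x m"
      proof
        fix m assume "m \<in> {p<..q}"
        then have "x (Suc p) \<le> x m" using sorted by auto
        then show "0 \<le> x m" using \<open>\<not> x (Suc p) < 0\<close> by linarith
      qed
      then have "\<forall>m\<in>{p<..q}. x m = 0" using sum0 sum_nonneg_eq_0_iff[of "{p<..q}" x] by auto
      then show False using m0 by auto
    qed
    have n2: "Suc p < q"
    proof (rule ccontr)
      assume "\<not> Suc p < q"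
      then have "q = Suc p" using m0 by auto
      then have "{p<..q} = {Suc p}" by auto
      then show False using sum0 xp1 \<open>q = Suc p\<close> by simp
    qed
    define S where "S = {p<..<q}"
    define r where "r k = - P k / ((real k - real p) * (real q - real k))" for k
    define mu where "mu = Max (r ` S)"
    have finS: "finite (r ` S)" unfolding S_def by simp
    have SpS: "Suc p \<in> S" unfolding S_def using n2 by auto
    have "mu \<in> r ` S" unfolding mu_def using finS SpS by (intro Max_in) auto
    then obtain ks where ks: "ks \<in> S" "r ks = mu" by auto
    have kslt: "p < ks" "ks < q" using ks(1) unfolding S_def by auto
    have "{p<..Suc p} = {Suc p}" by auto
    then have P1: "P (Suc p) = x (Suc p)" unfolding P_def by simp
    have "r (Suc p) > 0" unfolding r_def P1 using xp1 n2
      by (intro divide_pos_pos mult_pos_pos) auto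
    moreover have "r (Suc p) \<le> mu" unfolding mu_def using finS SpS by simp
    ultimately have mupos: "mu > 0" by linarith
    have rle: "r k \<le> mu" if "k \<in> S" for k unfolding mu_def using finS that by simp
    have den: "(real k - real p) * (real q - real k) > 0" if "k \<in> S" for k
      using that unfolding S_def by (intro mult_pos_pos) auto
    have bound: "- P k \<le> mu * ((real k - real p) * (real q - real k))" if "k \<in> S" for k
    proof -
      have h: "(- P k) / ((real k - real p) * (real q - real k)) \<le> mu" using rle[OF that] unfolding r_def .
      show ?thesis using h den[OF that] by (simp only: pos_divide_le_eq)
    qed
    have rc: "r k \<le> c" if "k \<in> S" for k
    proof -
      have "- P k \<le> c * ((real k - real p) * (real q - real k))"
        using pre that unfolding P_def S_def by (auto simp: algebra_simps)
      then show ?thesis using den[OF that] unfolding r_def by (simp only: pos_divide_le_eq)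
    qed
    have muc: "mu \<le> c" using rc ks by auto
    define th where "th = c / mu"
    have cpos: "c > 0" using mupos muc by linarith
    have th1: "th \<ge> 1" unfolding th_def using muc mupos by simp
    have thmu: "th * mu = c" unfolding th_def using mupos by simp
    have thP: "th * P k \<ge> - c * (real k - real p) * (real q - real k)" if "p \<le> k" "k \<le> q" for k
    proof (cases "k \<in> S")
      case True
      have "th * (- P k) \<le> th * (mu * ((real k - real p) * (real q - real k)))"
        using bound[OF True] th1 by (intro mult_left_mono) auto
      also have "\<dots> = (th * mu) * ((real k - real p) * (real q - real k))" by (simp add: mult.assoc)
      finally have "th * (- P k) \<le> c * ((real k - real p) * (real q - real k))" using thmu by simp
      then show ?thesis by (simp add: algebra_simps)
    next
      case False
      then have "k = p \<or> k = q" using that unfolding S_def by auto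
      then show ?thesis using sum0 unfolding P_def by auto
    qed
    have tight: "th * P ks = - c * (real ks - real p) * (real q - real ks)"
    proof -
      have "P ks = - mu * ((real ks - real p) * (real q - real ks))"
        using ks den[OF ks(1)] unfolding r_def by (simp add: field_simps)
      then have "th * P ks = - (th * mu) * ((real ks - real p) * (real q - real ks))" by simp
      then show ?thesis using thmu by simp
    qed
    have thpos: "th > 0" using th1 by simp
    have Pq: "P q = 0" using sum0 unfolding P_def .
    have sumlin: "(\<Sum>m\<in>{a<..b}. th * x m + C) = th * (\<Sum>m\<in>{a<..b}. x m) + C * (real b - real a)"
      if "a \<le> b" for a b C
      using that by (simp add: sum.distrib sum_distrib_left[symmetric] constsum)
    define xL where "xL m = th * x m + c * (real q - real ks)" for m
    define xR where "xR m = th * x m - c * (real ks - real p)" for m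
    have "\<exists>z. (\<forall>i j. p < j \<longrightarrow> j < i \<longrightarrow> i \<le> ks \<longrightarrow> 0 \<le> z i j \<and> z i j \<le> c) \<and>
       (\<forall>m\<in>{p<..ks}. xL m = (\<Sum>j\<in>{p<..<m}. z m j) - (\<Sum>i\<in>{m<..ks}. z i m))"
    proof (rule less.hyps[where p=p and q=ks and x=xL])
      show "ks - p < q - p" using kslt by simp
      show "p \<le> ks" using kslt by simp
      show "0 \<le> c" by fact
      show "\<forall>i j. p < i \<longrightarrow> i \<le> j \<longrightarrow> j \<le> ks \<longrightarrow> xL i \<le> xL j"
        using sorted kslt thpos unfolding xL_def by (auto intro: mult_left_mono)
      have "(\<Sum>m\<in>{p<..ks}. xL m) = th * P ks + c * (real q - real ks) * (real ks - real p)"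
        unfolding xL_def P_def using sumlin[of p ks "c * (real q - real ks)"] kslt by simp
      then show "(\<Sum>m\<in>{p<..ks}. xL m) = 0"
        using tight by (simp add: algebra_simps)
      show "\<forall>k. p \<le> k \<longrightarrow> k \<le> ks \<longrightarrow> - c * (real k - real p) * (real ks - real k) \<le> (\<Sum>m\<in>{p<..k}. xL m)"
      proof (intro allI impI)
        fix k assume k: "p \<le> k" "k \<le> ks"
        have a: "th * P k \<ge> - c * (real k - real p) * (real q - real k)" using thP k kslt by simp
        have b: "- c * (real k - real p) * (real q - real k) + c * (real q - real ks) * (real k - real p)
            = - c * (real k - real p) * (real ks - real k)" by (simp add: algebra_simps)
        have "(\<Sum>m\<in>{p<..k}. xL m) = th * P k + c * (real q - real ks) * (real k - real p)"
          unfolding xL_def P_def using sumlin[of p k "c * (real q - real ks)"] k by simp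
        then show "- c * (real k - real p) * (real ks - real k) \<le> (\<Sum>m\<in>{p<..k}. xL m)"
          using a b by linarith
      qed
    qed
    then obtain zL where zL: "\<forall>i j. p < j \<longrightarrow> j < i \<longrightarrow> i \<le> ks \<longrightarrow> 0 \<le> zL i j \<and> zL i j \<le> c"
       "\<forall>m\<in>{p<..ks}. xL m = (\<Sum>j\<in>{p<..<m}. zL m j) - (\<Sum>i\<in>{m<..ks}. zL i m)" by blast
    have "\<exists>z. (\<forall>i j. ks < j \<longrightarrow> j < i \<longrightarrow> i \<le> q \<longrightarrow> 0 \<le> z i j \<and> z i j \<le> c) \<and>
       (\<forall>m\<in>{ks<..q}. xR m = (\<Sum>j\<in>{ks<..<m}. z m j) - (\<Sum>i\<in>{m<..q}. z i m))"
    proof (rule less.hyps[where p=ks and q=q and x=xR])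
      show "q - ks < q - p" using kslt by simp
      show "ks \<le> q" using kslt by simp
      show "0 \<le> c" by fact
      show "\<forall>i j. ks < i \<longrightarrow> i \<le> j \<longrightarrow> j \<le> q \<longrightarrow> xR i \<le> xR j"
        using sorted kslt thpos unfolding xR_def by (auto intro: mult_left_mono)
      have spl: "P k = P ks + (\<Sum>m\<in>{ks<..k}. x m)" if "ks \<le> k" for k
        unfolding P_def using split1[of p ks k x] that kslt by simp
      have sR: "(\<Sum>m\<in>{ks<..k}. xR m) = th * (P k - P ks) - c * (real ks - real p) * (real k - real ks)"
        if "ks \<le> k" for k
        unfolding xR_def using sumlin[of ks k "- c * (real ks - real p)"] that spl[OF that] by simp
      show "(\<Sum>m\<in>{ks<..q}. xR m) = 0"
        using sR[of q] kslt tight Pq by (simp add: algebra_simps)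
      show "\<forall>k. ks \<le> k \<longrightarrow> k \<le> q \<longrightarrow> - c * (real k - real ks) * (real q - real k) \<le> (\<Sum>m\<in>{ks<..k}. xR m)"
      proof (intro allI impI)
        fix k assume k: "ks \<le> k" "k \<le> q"
        have a: "th * P k \<ge> - c * (real k - real p) * (real q - real k)" using thP k kslt by simp
        have b: "- c * (real k - real p) * (real q - real k) + c * (real ks - real p) * (real q - real ks)
            - c * (real ks - real p) * (real k - real ks) = - c * (real k - real ks) * (real q - real k)"
          by (simp add: algebra_simps)
        show "- c * (real k - real ks) * (real q - real k) \<le> (\<Sum>m\<in>{ks<..k}. xR m)"
          using sR[OF k(1)] a b tight by (simp add: algebra_simps)
      qed
    qed
    then obtain zR where zR: "\<forall>i j. ks < j \<longrightarrow> j < i \<longrightarrow> i \<le> q \<longrightarrow> 0 \<le> zR i j \<and> zR i j \<le> c"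
       "\<forall>m\<in>{ks<..q}. xR m = (\<Sum>j\<in>{ks<..<m}. zR m j) - (\<Sum>i\<in>{m<..q}. zR i m)" by blast
    define z0 where "z0 i j = (if i \<le> ks then zL i j else if ks < j then zR i j else c)" for i j
    have hz: "0 \<le> w / th \<and> w / th \<le> c" if "0 \<le> w" "w \<le> c" for w
    proof -
      have "w * 1 \<le> w * th" using that th1 by (intro mult_left_mono) auto
      then have "w / th \<le> w" using thpos by (simp add: pos_divide_le_eq)
      then show ?thesis using that thpos by simp
    qed
    have z0b: "0 \<le> z0 i j \<and> z0 i j \<le> c" if "p < j" "j < i" "i \<le> q" for i j
      using zL(1) zR(1) that cpos unfolding z0_def by auto
    have eq: "th * x m = (\<Sum>j\<in>{p<..<m}. z0 m j) - (\<Sum>i\<in>{m<..q}. z0 i m)" if m: "m \<in> {p<..q}" for m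
    proof (cases "m \<le> ks")
      case True
      have e1: "(\<Sum>j\<in>{p<..<m}. z0 m j) = (\<Sum>j\<in>{p<..<m}. zL m j)"
        using True unfolding z0_def by simp
      have "(\<Sum>i\<in>{m<..q}. z0 i m) = (\<Sum>i\<in>{m<..ks}. z0 i m) + (\<Sum>i\<in>{ks<..q}. z0 i m)"
        using split1[of m ks q] True kslt by simp
      also have "(\<Sum>i\<in>{m<..ks}. z0 i m) = (\<Sum>i\<in>{m<..ks}. zL i m)"
        unfolding z0_def by simp
      also have "(\<Sum>i\<in>{ks<..q}. z0 i m) = (\<Sum>i\<in>{ks<..q}. c)"
        unfolding z0_def using True by (intro sum.cong) auto
      also have "\<dots> = c * (real q - real ks)" using constsum kslt by simp
      finally have e2: "(\<Sum>i\<in>{m<..q}. z0 i m) = (\<Sum>i\<in>{m<..ks}. zL i m) + c * (real q - real ks)" .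
      have "xL m = (\<Sum>j\<in>{p<..<m}. zL m j) - (\<Sum>i\<in>{m<..ks}. zL i m)" using zL(2) m True by auto
      then show ?thesis using e1 e2 unfolding xL_def by simp
    next
      case False
      have "(\<Sum>j\<in>{p<..<m}. z0 m j) = (\<Sum>j\<in>{p<..ks}. z0 m j) + (\<Sum>j\<in>{ks<..<m}. z0 m j)"
        using split2[of p ks m] False kslt by simp
      also have "(\<Sum>j\<in>{p<..ks}. z0 m j) = (\<Sum>j\<in>{p<..ks}. c)"
        unfolding z0_def using False by (intro sum.cong) auto
      also have "\<dots> = c * (real ks - real p)" using constsum kslt by simp
      also have "(\<Sum>j\<in>{ks<..<m}. z0 m j) = (\<Sum>j\<in>{ks<..<m}. zR m j)"
        unfolding z0_def using False by (intro sum.cong) auto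
      finally have e1: "(\<Sum>j\<in>{p<..<m}. z0 m j) = c * (real ks - real p) + (\<Sum>j\<in>{ks<..<m}. zR m j)" .
      have e2: "(\<Sum>i\<in>{m<..q}. z0 i m) = (\<Sum>i\<in>{m<..q}. zR i m)"
        unfolding z0_def using False by (intro sum.cong) auto
      have "xR m = (\<Sum>j\<in>{ks<..<m}. zR m j) - (\<Sum>i\<in>{m<..q}. zR i m)" using zR(2) m False by auto
      then show ?thesis using e1 e2 unfolding xR_def by simp
    qed
    show ?thesis
    proof (intro exI[of _ "\<lambda>i j. z0 i j / th"] conjI ballI allI impI)
      fix i j assume "p < j" "j < i" "i \<le> q"
      then show "0 \<le> z0 i j / th" "z0 i j / th \<le> c" using hz z0b by blast+
    next
      fix m assume m: "m \<in> {p<..q}"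
      have "x m = (th * x m) / th" using thpos by simp
      also have "\<dots> = (\<Sum>j\<in>{p<..<m}. z0 m j / th) - (\<Sum>i\<in>{m<..q}. z0 i m / th)"
        using eq[OF m] by (simp add: sum_divide_distrib diff_divide_distrib)
      finally show "x m = (\<Sum>j\<in>{p<..<m}. z0 m j / th) - (\<Sum>i\<in>{m<..q}. z0 i m / th)" .
    qed
  qed
qed

lemma block:
  fixes cap lo hi :: real and y :: "nat \<Rightarrow> real"
  assumes "p \<le> q" "cap \<ge> 0"
    and "\<forall>i j. p < i \<longrightarrow> i \<le> j \<longrightarrow> j \<le> q \<longrightarrow> y i \<le> y j"
    and "\<forall>k. p \<le> k \<longrightarrow> k \<le> q \<longrightarrow> (real k - real p) * lo \<le> (\<Sum>m\<in>{p<..k}. y m) + cap * (real k - real p) * (real q - real k)"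
    and "\<forall>k. p \<le> k \<longrightarrow> k \<le> q \<longrightarrow> (\<Sum>m\<in>{p<..q}. y m) - ((\<Sum>m\<in>{p<..k}. y m) + cap * (real k - real p) * (real q - real k)) \<le> (real q - real k) * hi"
  shows "\<exists>z cv. (\<forall>i j. p < j \<longrightarrow> j < i \<longrightarrow> i \<le> q \<longrightarrow> 0 \<le> z i j \<and> z i j \<le> cap) \<and>
     (\<forall>m\<in>{p<..q}. lo \<le> cv m \<and> cv m \<le> hi \<and> y m = (\<Sum>j\<in>{p<..<m}. z m j) - (\<Sum>i\<in>{m<..q}. z i m) + cv m)"
  using assms
proof (induction "q - p" arbitrary: p y rule: less_induct)
  case (less p y)
  note sorted = less.prems(3) and H1 = less.prems(4) and H2 = less.prems(5)
  define K where "K k = (\<Sum>m\<in>{p<..k}. y m) + cap * (real k - real p) * (real q - real k)" for k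
  show ?case
  proof (cases "p = q")
    case True
    then show ?thesis using \<open>cap \<ge> 0\<close> by (intro exI[of _ "\<lambda>i j. 0"] exI[of _ "\<lambda>m. 0"]) auto
  next
    case False
    then have pq: "p < q" using less.prems(1) by simp
    define S where "S = {p<..q}"
    define r where "r k = K k / (real k - real p)" for k
    define s where "s = Min (r ` S)"
    have finS: "finite (r ` S)" unfolding S_def by simp
    have qS: "q \<in> S" unfolding S_def using pq by auto
    have "s \<in> r ` S" unfolding s_def using finS qS by (intro Min_in) auto
    then obtain k1 where k1: "k1 \<in> S" "r k1 = s" by auto
    have k1lt: "p < k1" "k1 \<le> q" using k1(1) unfolding S_def by auto
    have dpos: "real k - real p > 0" if "k \<in> S" for k using that unfolding S_def by auto
    have sle: "s \<le> r k" if "k \<in> S" for k unfolding s_def using finS that by simp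
    have Kge: "K k \<ge> s * (real k - real p)" if "k \<in> S" for k
    proof -
      have "s \<le> K k / (real k - real p)" using sle[OF that] unfolding r_def .
      then show ?thesis using dpos[OF that] by (simp add: pos_le_divide_eq)
    qed
    have Kk1: "K k1 = s * (real k1 - real p)"
    proof -
      have "K k1 / (real k1 - real p) = s" using k1(2) unfolding r_def .
      then show ?thesis using dpos[OF k1(1)] by (simp add: divide_eq_eq)
    qed
    have los: "lo \<le> s"
    proof -
      have "(real k1 - real p) * lo \<le> K k1" using H1 k1lt unfolding K_def by simp
      then show ?thesis using Kk1 dpos[OF k1(1)] by (simp add: mult.commute)
    qed
    have shi: "s \<le> hi"
    proof -
      have "K q \<le> (real q - real p) * hi" using H2[rule_format, of p] pq unfolding K_def by simp
      moreover have "s * (real q - real p) \<le> K q" using Kge[OF qS] .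
      ultimately have "s * (real q - real p) \<le> hi * (real q - real p)" by (simp add: mult.commute)
      then show ?thesis using pq by simp
    qed
    have sumlin: "(\<Sum>m\<in>{a<..b}. y m + C) = (\<Sum>m\<in>{a<..b}. y m) + C * (real b - real a)"
      if "a \<le> b" for a b C
      using that by (simp add: sum.distrib constsum)
    define x where "x m = y m + (cap * (real q - real k1) - s)" for m
    have "\<exists>z. (\<forall>i j. p < j \<longrightarrow> j < i \<longrightarrow> i \<le> k1 \<longrightarrow> 0 \<le> z i j \<and> z i j \<le> cap) \<and>
       (\<forall>m\<in>{p<..k1}. x m = (\<Sum>j\<in>{p<..<m}. z m j) - (\<Sum>i\<in>{m<..k1}. z i m))"
    proof (rule zon)
      show "p \<le> k1" using k1lt by simp
      show "0 \<le> cap" by fact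
      show "\<forall>i j. p < i \<longrightarrow> i \<le> j \<longrightarrow> j \<le> k1 \<longrightarrow> x i \<le> x j"
        using sorted k1lt unfolding x_def by auto
      have sx: "(\<Sum>m\<in>{p<..k}. x m) = (\<Sum>m\<in>{p<..k}. y m) + (cap * (real q - real k1) - s) * (real k - real p)"
        if "p \<le> k" for k
        unfolding x_def by (rule sumlin[OF that])
      show "(\<Sum>m\<in>{p<..k1}. x m) = 0"
        using sx[of k1] k1lt Kk1 unfolding K_def by (simp add: algebra_simps)
      show "\<forall>k. p \<le> k \<longrightarrow> k \<le> k1 \<longrightarrow> - cap * (real k - real p) * (real k1 - real k) \<le> (\<Sum>m\<in>{p<..k}. x m)"
      proof (intro allI impI)
        fix k assume k: "p \<le> k" "k \<le> k1"
        have a: "K k \<ge> s * (real k - real p)"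
        proof (cases "k = p")
          case True then show ?thesis unfolding K_def by simp
        next
          case False then show ?thesis using Kge k k1lt unfolding S_def by auto
        qed
        have b: "cap * (real k - real p) * (real q - real k) = cap * (real q - real k1) * (real k - real p) + cap * (real k - real p) * (real k1 - real k)"
          by (simp add: algebra_simps)
        show "- cap * (real k - real p) * (real k1 - real k) \<le> (\<Sum>m\<in>{p<..k}. x m)"
          using sx[OF k(1)] a b unfolding K_def by (simp add: algebra_simps)
      qed
    qed
    then obtain zL where zL: "\<forall>i j. p < j \<longrightarrow> j < i \<longrightarrow> i \<le> k1 \<longrightarrow> 0 \<le> zL i j \<and> zL i j \<le> cap"
       "\<forall>m\<in>{p<..k1}. x m = (\<Sum>j\<in>{p<..<m}. zL m j) - (\<Sum>i\<in>{m<..k1}. zL i m)" by blast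
    define y' where "y' m = y m - cap * (real k1 - real p)" for m
    define K' where "K' k = (\<Sum>m\<in>{k1<..k}. y' m) + cap * (real k - real k1) * (real q - real k)" for k
    have K'K: "K' k = K k - K k1" if "k1 \<le> k" for k
    proof -
      have "(\<Sum>m\<in>{p<..k}. y m) = (\<Sum>m\<in>{p<..k1}. y m) + (\<Sum>m\<in>{k1<..k}. y m)"
        using split1[of p k1 k y] that k1lt by simp
      moreover have "(\<Sum>m\<in>{k1<..k}. y' m) = (\<Sum>m\<in>{k1<..k}. y m) - cap * (real k1 - real p) * (real k - real k1)"
        unfolding y'_def using sumlin[of k1 k "- (cap * (real k1 - real p))"] that by simp
      moreover have "cap * (real k - real p) * (real q - real k) - cap * (real k1 - real p) * (real q - real k1)
          = - cap * (real k1 - real p) * (real k - real k1) + cap * (real k - real k1) * (real q - real k)"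
        by (simp add: algebra_simps)
      ultimately show ?thesis unfolding K'_def K_def by (simp add: algebra_simps)
    qed
    have "\<exists>z cv. (\<forall>i j. k1 < j \<longrightarrow> j < i \<longrightarrow> i \<le> q \<longrightarrow> 0 \<le> z i j \<and> z i j \<le> cap) \<and>
     (\<forall>m\<in>{k1<..q}. lo \<le> cv m \<and> cv m \<le> hi \<and> y' m = (\<Sum>j\<in>{k1<..<m}. z m j) - (\<Sum>i\<in>{m<..q}. z i m) + cv m)"
    proof (rule less.hyps[where p=k1 and y=y'])
      show "q - k1 < q - p" using k1lt by simp
      show "k1 \<le> q" using k1lt by simp
      show "0 \<le> cap" by fact
      show "\<forall>i j. k1 < i \<longrightarrow> i \<le> j \<longrightarrow> j \<le> q \<longrightarrow> y' i \<le> y' j"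
        using sorted k1lt unfolding y'_def by auto
      show "\<forall>k. k1 \<le> k \<longrightarrow> k \<le> q \<longrightarrow> (real k - real k1) * lo \<le> (\<Sum>m\<in>{k1<..k}. y' m) + cap * (real k - real k1) * (real q - real k)"
      proof (intro allI impI)
        fix k assume k: "k1 \<le> k" "k \<le> q"
        have kS: "k \<in> S" using k k1lt unfolding S_def by auto
        have "K k - K k1 \<ge> s * (real k - real k1)" using Kge[OF kS] Kk1 by (simp add: algebra_simps)
        moreover have "s * (real k - real k1) \<ge> lo * (real k - real k1)" using los k by (intro mult_right_mono) auto
        ultimately show "(real k - real k1) * lo \<le> (\<Sum>m\<in>{k1<..k}. y' m) + cap * (real k - real k1) * (real q - real k)"
          using K'K[OF k(1)] unfolding K'_def by (simp add: mult.commute)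
      qed
      show "\<forall>k. k1 \<le> k \<longrightarrow> k \<le> q \<longrightarrow> (\<Sum>m\<in>{k1<..q}. y' m) - ((\<Sum>m\<in>{k1<..k}. y' m) + cap * (real k - real k1) * (real q - real k)) \<le> (real q - real k) * hi"
      proof (intro allI impI)
        fix k assume k: "k1 \<le> k" "k \<le> q"
        have "K q - K k \<le> (real q - real k) * hi" using H2 k k1lt unfolding K_def by simp
        moreover have "(\<Sum>m\<in>{k1<..q}. y' m) = K' q" unfolding K'_def by simp
        ultimately show "(\<Sum>m\<in>{k1<..q}. y' m) - ((\<Sum>m\<in>{k1<..k}. y' m) + cap * (real k - real k1) * (real q - real k)) \<le> (real q - real k) * hi"
          using K'K[OF k(1)] K'K[of q] k unfolding K'_def[of k] by simp
      qed
    qed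
    then obtain zR cvR where zR: "\<forall>i j. k1 < j \<longrightarrow> j < i \<longrightarrow> i \<le> q \<longrightarrow> 0 \<le> zR i j \<and> zR i j \<le> cap"
       "\<forall>m\<in>{k1<..q}. lo \<le> cvR m \<and> cvR m \<le> hi \<and> y' m = (\<Sum>j\<in>{k1<..<m}. zR m j) - (\<Sum>i\<in>{m<..q}. zR i m) + cvR m" by blast
    define z0 where "z0 i j = (if i \<le> k1 then zL i j else if k1 < j then zR i j else cap)" for i j
    define cv where "cv m = (if m \<le> k1 then s else cvR m)" for m
    show ?thesis
    proof (intro exI[of _ z0] exI[of _ cv] conjI ballI allI impI)
      fix i j assume "p < j" "j < i" "i \<le> q"
      then show "0 \<le> z0 i j" "z0 i j \<le> cap" using zL(1) zR(1) \<open>cap \<ge> 0\<close> unfolding z0_def by auto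
    next
      fix m assume m: "m \<in> {p<..q}"
      show "lo \<le> cv m" "cv m \<le> hi" using los shi zR(2) m unfolding cv_def by auto
      show "y m = (\<Sum>j\<in>{p<..<m}. z0 m j) - (\<Sum>i\<in>{m<..q}. z0 i m) + cv m"
      proof (cases "m \<le> k1")
        case True
        have e1: "(\<Sum>j\<in>{p<..<m}. z0 m j) = (\<Sum>j\<in>{p<..<m}. zL m j)"
          using True unfolding z0_def by simp
        have "(\<Sum>i\<in>{m<..q}. z0 i m) = (\<Sum>i\<in>{m<..k1}. z0 i m) + (\<Sum>i\<in>{k1<..q}. z0 i m)"
          using split1[of m k1 q] True k1lt by simp
        also have "(\<Sum>i\<in>{m<..k1}. z0 i m) = (\<Sum>i\<in>{m<..k1}. zL i m)"
          unfolding z0_def by simp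
        also have "(\<Sum>i\<in>{k1<..q}. z0 i m) = (\<Sum>i\<in>{k1<..q}. cap)"
          unfolding z0_def using True by (intro sum.cong) auto
        also have "\<dots> = cap * (real q - real k1)" using constsum k1lt by simp
        finally have e2: "(\<Sum>i\<in>{m<..q}. z0 i m) = (\<Sum>i\<in>{m<..k1}. zL i m) + cap * (real q - real k1)" .
        have "x m = (\<Sum>j\<in>{p<..<m}. zL m j) - (\<Sum>i\<in>{m<..k1}. zL i m)" using zL(2) m True by auto
        then show ?thesis using e1 e2 True unfolding x_def cv_def by simp
      next
        case False
        have "(\<Sum>j\<in>{p<..<m}. z0 m j) = (\<Sum>j\<in>{p<..k1}. z0 m j) + (\<Sum>j\<in>{k1<..<m}. z0 m j)"
          using split2[of p k1 m] False k1lt by simp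
        also have "(\<Sum>j\<in>{p<..k1}. z0 m j) = (\<Sum>j\<in>{p<..k1}. cap)"
          unfolding z0_def using False by (intro sum.cong) auto
        also have "\<dots> = cap * (real k1 - real p)" using constsum k1lt by simp
        also have "(\<Sum>j\<in>{k1<..<m}. z0 m j) = (\<Sum>j\<in>{k1<..<m}. zR m j)"
          unfolding z0_def using False by (intro sum.cong) auto
        finally have e1: "(\<Sum>j\<in>{p<..<m}. z0 m j) = cap * (real k1 - real p) + (\<Sum>j\<in>{k1<..<m}. zR m j)" .
        have e2: "(\<Sum>i\<in>{m<..q}. z0 i m) = (\<Sum>i\<in>{m<..q}. zR i m)"
          unfolding z0_def using False by (intro sum.cong) auto
        have "y' m = (\<Sum>j\<in>{k1<..<m}. zR m j) - (\<Sum>i\<in>{m<..q}. zR i m) + cvR m" using zR(2) m False by auto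
        then show ?thesis using e1 e2 False unfolding y'_def cv_def by simp
      qed
    qed
  qed
qed

lemma tri:
  fixes g :: "nat \<Rightarrow> nat \<Rightarrow> real"
  shows "(\<Sum>m\<in>{0<..l}. \<Sum>j\<in>{0<..<m}. g m j) = (\<Sum>m\<in>{0<..l}. \<Sum>i\<in>{m<..l}. g i m)"
proof (induction l)
  case 0 then show ?case by simp
next
  case (Suc l)
  have s1: "{0<..Suc l} = insert (Suc l) {0<..l}" by auto
  have s2: "{0<..<Suc l} = {0<..l}" by auto
  have s3: "{m<..Suc l} = insert (Suc l) {m<..l}" if "m \<in> {0<..l}" for m using that by auto
  have "(\<Sum>m\<in>{0<..Suc l}. \<Sum>i\<in>{m<..Suc l}. g i m)
      = (\<Sum>m\<in>{0<..l}. \<Sum>i\<in>{m<..Suc l}. g i m)" unfolding s1 by simp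
  also have "\<dots> = (\<Sum>m\<in>{0<..l}. g (Suc l) m + (\<Sum>i\<in>{m<..l}. g i m))"
    by (intro sum.cong refl) (simp add: s3)
  also have "\<dots> = (\<Sum>m\<in>{0<..l}. g (Suc l) m) + (\<Sum>m\<in>{0<..l}. \<Sum>i\<in>{m<..l}. g i m)"
    by (simp add: sum.distrib)
  finally have A: "(\<Sum>m\<in>{0<..Suc l}. \<Sum>i\<in>{m<..Suc l}. g i m) = (\<Sum>m\<in>{0<..l}. g (Suc l) m) + (\<Sum>m\<in>{0<..l}. \<Sum>i\<in>{m<..l}. g i m)" .
  have B: "(\<Sum>m\<in>{0<..Suc l}. \<Sum>j\<in>{0<..<m}. g m j) = (\<Sum>j\<in>{0<..<Suc l}. g (Suc l) j) + (\<Sum>m\<in>{0<..l}. \<Sum>j\<in>{0<..<m}. g m j)"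
    unfolding s1 by simp
  show ?case using A B Suc s2 by simp
qed

lemma flowD:
  fixes g :: "nat \<Rightarrow> nat \<Rightarrow> real"
  assumes "l \<le> d"
  shows "(\<Sum>m\<in>{0<..l}. (\<Sum>j\<in>{0<..<m}. g m j) - (\<Sum>i\<in>{m<..d}. g i m)) = - (\<Sum>m\<in>{0<..l}. \<Sum>i\<in>{l<..d}. g i m)"
proof -
  have "(\<Sum>m\<in>{0<..l}. (\<Sum>j\<in>{0<..<m}. g m j) - (\<Sum>i\<in>{m<..d}. g i m))
     = (\<Sum>m\<in>{0<..l}. ((\<Sum>j\<in>{0<..<m}. g m j) - (\<Sum>i\<in>{m<..l}. g i m)) - (\<Sum>i\<in>{l<..d}. g i m))"
  proof (intro sum.cong refl)
    fix m assume "m \<in> {0<..l}"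
    then have "(\<Sum>i\<in>{m<..d}. g i m) = (\<Sum>i\<in>{m<..l}. g i m) + (\<Sum>i\<in>{l<..d}. g i m)"
      using split1[of m l d "\<lambda>i. g i m"] assms by simp
    then show "(\<Sum>j\<in>{0<..<m}. g m j) - (\<Sum>i\<in>{m<..d}. g i m) = ((\<Sum>j\<in>{0<..<m}. g m j) - (\<Sum>i\<in>{m<..l}. g i m)) - (\<Sum>i\<in>{l<..d}. g i m)"
      by simp
  qed
  also have "\<dots> = (\<Sum>m\<in>{0<..l}. \<Sum>j\<in>{0<..<m}. g m j) - (\<Sum>m\<in>{0<..l}. \<Sum>i\<in>{m<..l}. g i m) - (\<Sum>m\<in>{0<..l}. \<Sum>i\<in>{l<..d}. g i m)"
    by (simp add: sum_subtractf)
  finally show ?thesis using tri[of g l] by simp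
qed

definition PP :: "nat \<Rightarrow> nat \<Rightarrow> (nat \<Rightarrow> real) \<Rightarrow> nat \<Rightarrow> real" where
  "PP a d v l = (\<Sum>i=1..l. v i) + (3/2) * real l * (real d - real l) + (real a / 2) * real l"

lemma ivl1: "{1..l} = {0<..(l::nat)}" by auto
lemma ivl2: "{1..<l} = {0<..<(l::nat)}" by auto

lemma decomp_ineq:
  fixes v :: "nat \<Rightarrow> real"
  assumes dec: "e_decomp a d v e" and ed: "e \<le> d"
  shows "\<forall>l\<le>d. PP a d v e \<le> PP a d v l \<and> (e < l \<longrightarrow> PP a d v e < PP a d v l)"
proof -
  obtain cc c where hcc: "\<forall>i j. 1 \<le> j \<longrightarrow> j < i \<longrightarrow> i \<le> d \<longrightarrow> 0 \<le> cc i j \<and> cc i j \<le> 3/2"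
    and hc: "\<forall>i\<in>{1..d}. (i \<le> e \<longrightarrow> - ((real a + 2) / 2) \<le> c i \<and> c i \<le> - (real a / 2)) \<and>
                 (e < i \<longrightarrow> - (real a / 2) < c i \<and> c i \<le> real a / 2)"
    and hv: "\<forall>m\<in>{1..d}. v m =
        (\<Sum>j\<in>{1..<m}. if (m \<le> e) = (j \<le> e) then cc m j else 0)
      - (\<Sum>i\<in>{m<..d}. if (m \<le> e) = (i \<le> e) then cc i m else 0)
      + (if m \<le> e then - (3/2) * (real d - real e) else (3/2) * real e)
      + c m"
    using dec unfolding e_decomp_def by blast
  define f where "f i j = (if (i \<le> e) = (j \<le> e) then cc i j else 0)" for i j
  define off where "off m = (if m \<le> e then - (3/2) * (real d - real e) else (3/2) * real e)" for m
  define inner where "inner m = (\<Sum>j\<in>{0<..<m}. f m j) - (\<Sum>i\<in>{m<..d}. f i m)" for m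
  have hv': "v m = inner m + off m + c m" if "m \<in> {0<..d}" for m
  proof -
    have a1: "(\<Sum>j\<in>{1..<m}. if (m \<le> e) = (j \<le> e) then cc m j else 0) = (\<Sum>j\<in>{0<..<m}. f m j)"
      unfolding ivl2 f_def by simp
    have a2: "(\<Sum>i\<in>{m<..d}. if (m \<le> e) = (i \<le> e) then cc i m else 0) = (\<Sum>i\<in>{m<..d}. f i m)"
      unfolding f_def by (intro sum.cong refl) auto
    show ?thesis using hv that a1 a2 unfolding inner_def off_def by auto
  qed
  define G where "G l = (\<Sum>m\<in>{0<..l}. c m + real a / 2)" for l
  define Q where "Q l = (\<Sum>m\<in>{0<..l}. \<Sum>i\<in>{l<..d}. f i m)" for l
  have PPeq: "PP a d v l = - Q l + (\<Sum>m\<in>{0<..l}. off m) + (3/2) * real l * (real d - real l) + G l"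
    if "l \<le> d" for l
  proof -
    have "(\<Sum>i=1..l. v i) = (\<Sum>m\<in>{0<..l}. inner m + off m + c m)"
      unfolding ivl1 using hv' that by (intro sum.cong refl) auto
    also have "\<dots> = (\<Sum>m\<in>{0<..l}. inner m) + (\<Sum>m\<in>{0<..l}. off m) + (\<Sum>m\<in>{0<..l}. c m)"
      by (simp add: sum.distrib)
    also have "(\<Sum>m\<in>{0<..l}. inner m) = - Q l"
      unfolding inner_def Q_def using flowD[OF that, of f] by simp
    also have "(\<Sum>m\<in>{0<..l}. c m) = G l - real a / 2 * real l"
      unfolding G_def by (simp add: sum.distrib)
    finally show ?thesis unfolding PP_def by simp
  qed
  have fnn: "0 \<le> f i m" if "0 < m" "m < i" "i \<le> d" for i m
    using hcc that unfolding f_def by auto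
  have fle: "f i m \<le> 3/2" if "0 < m" "m < i" "i \<le> d" for i m
    using hcc that unfolding f_def by auto
  have Qnn: "0 \<le> Q l" if "l \<le> d" for l
    unfolding Q_def using fnn by (intro sum_nonneg) auto
  have Q1: "Q l \<le> 3/2 * real l * (real e - real l)" if "l \<le> e" for l
  proof -
    have "(\<Sum>i\<in>{l<..d}. f i m) \<le> 3/2 * (real e - real l)" if m: "m \<in> {0<..l}" for m
    proof -
      have "(\<Sum>i\<in>{l<..d}. f i m) = (\<Sum>i\<in>{l<..e}. f i m) + (\<Sum>i\<in>{e<..d}. f i m)"
        using split1[of l e d "\<lambda>i. f i m"] \<open>l \<le> e\<close> ed by simp
      also have "(\<Sum>i\<in>{e<..d}. f i m) = 0" unfolding f_def using m \<open>l \<le> e\<close> by (intro sum.neutral) auto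
      also have "(\<Sum>i\<in>{l<..e}. f i m) \<le> (\<Sum>i\<in>{l<..e}. 3/2)"
        using fle m ed by (intro sum_mono) auto
      also have "\<dots> = 3/2 * (real e - real l)" using constsum \<open>l \<le> e\<close> by simp
      finally show ?thesis by simp
    qed
    then have "Q l \<le> (\<Sum>m\<in>{0<..l}. 3/2 * (real e - real l))" unfolding Q_def by (intro sum_mono) auto
    also have "\<dots> = 3/2 * real l * (real e - real l)" by simp
    finally show ?thesis .
  qed
  have Q2: "Q l \<le> 3/2 * (real l - real e) * (real d - real l)" if "e \<le> l" "l \<le> d" for l
  proof -
    have "Q l = (\<Sum>m\<in>{0<..e}. \<Sum>i\<in>{l<..d}. f i m) + (\<Sum>m\<in>{e<..l}. \<Sum>i\<in>{l<..d}. f i m)"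
      unfolding Q_def using split1[of 0 e l "\<lambda>m. \<Sum>i\<in>{l<..d}. f i m"] that by simp
    also have "(\<Sum>m\<in>{0<..e}. \<Sum>i\<in>{l<..d}. f i m) = 0"
      unfolding f_def using that by (intro sum.neutral ballI) auto
    also have "(\<Sum>m\<in>{e<..l}. \<Sum>i\<in>{l<..d}. f i m) \<le> (\<Sum>m\<in>{e<..l}. \<Sum>i\<in>{l<..d}. 3/2)"
      using fle that by (intro sum_mono) auto
    also have "\<dots> = 3/2 * (real l - real e) * (real d - real l)"
      using that by (simp add: of_nat_diff algebra_simps)
    finally show ?thesis by simp
  qed
  have off1: "(\<Sum>m\<in>{0<..l}. off m) = - (3/2) * (real d - real e) * real l" if "l \<le> e" for l
  proof -
    have "(\<Sum>m\<in>{0<..l}. off m) = (\<Sum>m\<in>{0<..l}. - (3/2) * (real d - real e))"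
      unfolding off_def using that by (intro sum.cong refl) auto
    then show ?thesis by simp
  qed
  have off2: "(\<Sum>m\<in>{0<..l}. off m) = - (3/2) * (real d - real e) * real e + 3/2 * real e * (real l - real e)"
    if "e \<le> l" for l
  proof -
    have "(\<Sum>m\<in>{0<..l}. off m) = (\<Sum>m\<in>{0<..e}. off m) + (\<Sum>m\<in>{e<..l}. off m)"
      using split1[of 0 e l off] that by simp
    also have "(\<Sum>m\<in>{e<..l}. off m) = (\<Sum>m\<in>{e<..l}. 3/2 * real e)"
      unfolding off_def by (intro sum.cong refl) auto
    also have "\<dots> = 3/2 * real e * (real l - real e)" using constsum that by simp
    finally show ?thesis using off1[of e] by simp
  qed
  have PPe: "PP a d v e = G e"
  proof -
    have "Q e = 0" using Q1[of e] Qnn[OF ed] by simp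
    then show ?thesis using PPeq[OF ed] off1[of e] by (simp add: algebra_simps)
  qed
  have cle: "c m + real a / 2 \<le> 0" if "0 < m" "m \<le> e" for m using hc that ed by auto
  have cgt: "c m + real a / 2 > 0" if "e < m" "m \<le> d" for m using hc that by auto
  show ?thesis
  proof (intro allI impI conjI)
    fix l assume ld: "l \<le> d"
    show "PP a d v e \<le> PP a d v l"
    proof (cases "l \<le> e")
      case True
      have "PP a d v l \<ge> G l"
      proof -
        have "- Q l + (\<Sum>m\<in>{0<..l}. off m) + (3/2) * real l * (real d - real l) \<ge> 0"
        proof -
          have "- (3/2) * (real d - real e) * real l + (3/2) * real l * (real d - real l) = 3/2 * real l * (real e - real l)"
            by (simp add: field_simps)
          then show ?thesis using Q1[OF True] off1[OF True] by linarith
        qed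
        then show ?thesis using PPeq[OF ld] by simp
      qed
      moreover have "G e \<le> G l"
      proof -
        have "G e = G l + (\<Sum>m\<in>{l<..e}. c m + real a / 2)"
          unfolding G_def using split1[of 0 l e] True by simp
        moreover have "(\<Sum>m\<in>{l<..e}. c m + real a / 2) \<le> 0"
          using cle by (intro sum_nonpos) auto
        ultimately show ?thesis by simp
      qed
      ultimately show ?thesis using PPe by simp
    next
      case False
      have "PP a d v l \<ge> G l"
      proof -
        have "- Q l + (\<Sum>m\<in>{0<..l}. off m) + (3/2) * real l * (real d - real l) \<ge> 0"
        proof -
          have "- (3/2) * (real d - real e) * real e + 3/2 * real e * (real l - real e) + (3/2) * real l * (real d - real l) = 3/2 * (real l - real e) * (real d - real l)"
            by (simp add: field_simps)
          then show ?thesis using Q2[of l] off2[of l] False ld by linarith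
        qed
        then show ?thesis using PPeq[OF ld] by simp
      qed
      moreover have "G e < G l"
      proof -
        have "G l = G e + (\<Sum>m\<in>{e<..l}. c m + real a / 2)"
          unfolding G_def using split1[of 0 e l] False by simp
        moreover have "(\<Sum>m\<in>{e<..l}. c m + real a / 2) > 0"
          using cgt False ld by (intro sum_pos) auto
        ultimately show ?thesis by simp
      qed
      ultimately show ?thesis using PPe by simp
    qed
  next
    fix l assume ld: "l \<le> d" and el: "e < l"
    have "PP a d v l \<ge> G l"
    proof -
      have "- Q l + (\<Sum>m\<in>{0<..l}. off m) + (3/2) * real l * (real d - real l) \<ge> 0"
      proof -
        have "- (3/2) * (real d - real e) * real e + 3/2 * real e * (real l - real e) + (3/2) * real l * (real d - real l) = 3/2 * (real l - real e) * (real d - real l)"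
          by (simp add: field_simps)
        then show ?thesis using Q2[of l] off2[of l] el ld by linarith
      qed
      then show ?thesis using PPeq[OF ld] by simp
    qed
    moreover have "G e < G l"
    proof -
      have "G l = G e + (\<Sum>m\<in>{e<..l}. c m + real a / 2)"
        unfolding G_def using split1[of 0 e l] el by simp
      moreover have "(\<Sum>m\<in>{e<..l}. c m + real a / 2) > 0"
        using cgt el ld by (intro sum_pos) auto
      ultimately show ?thesis by simp
    qed
    ultimately show "PP a d v e < PP a d v l" using PPe by simp
  qed
qed

lemma inV_bounds:
  fixes v :: "nat \<Rightarrow> real"
  assumes iv: "in_V a d v" and ld: "l \<le> d"
  shows "PP a d v l \<ge> - real l" and "PP a d v d - PP a d v l \<le> (real d - real l) * real a"
proof -
  obtain t :: "nat \<Rightarrow> nat \<Rightarrow> real" and s r :: "nat \<Rightarrow> real" where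
    ht: "\<forall>i\<in>{1..d}. \<forall>j\<in>{1..d}. 0 \<le> t i j \<and> t i j \<le> 3/2"
    and hs: "\<forall>k\<in>{1..d}. - (real a / 2) \<le> s k \<and> s k \<le> real a / 2 \<and> -1 \<le> r k \<and> r k \<le> 0"
    and hv: "\<forall>m\<in>{1..d}. v m = (\<Sum>j=1..d. t m j) - (\<Sum>i=1..d. t i m) + s m + r m"
    using iv unfolding in_V_def by blast
  define A where "A l = (\<Sum>m\<in>{0<..l}. \<Sum>j\<in>{l<..d}. t m j)" for l
  define B where "B l = (\<Sum>m\<in>{0<..l}. \<Sum>j\<in>{l<..d}. t j m)" for l
  define inner where "inner m = (\<Sum>j\<in>{0<..d}. t m j) - (\<Sum>i\<in>{0<..d}. t i m)" for m
  have pre: "(\<Sum>m\<in>{0<..l}. v m) = A l - B l + (\<Sum>m\<in>{0<..l}. s m + r m)" if "l \<le> d" for l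
  proof -
    have "(\<Sum>m\<in>{0<..l}. v m) = (\<Sum>m\<in>{0<..l}. inner m + (s m + r m))"
      using hv that unfolding inner_def ivl1 by (intro sum.cong refl) auto
    also have "\<dots> = (\<Sum>m\<in>{0<..l}. inner m) + (\<Sum>m\<in>{0<..l}. s m + r m)" by (simp add: sum.distrib)
    also have "(\<Sum>m\<in>{0<..l}. inner m) = (\<Sum>m\<in>{0<..l}. ((\<Sum>j\<in>{0<..l}. t m j) + (\<Sum>j\<in>{l<..d}. t m j))
                                     - ((\<Sum>i\<in>{0<..l}. t i m) + (\<Sum>i\<in>{l<..d}. t i m)))"
      unfolding inner_def
    proof (intro sum.cong refl)
      fix m
      show "(\<Sum>j\<in>{0<..d}. t m j) - (\<Sum>i\<in>{0<..d}. t i m) = ((\<Sum>j\<in>{0<..l}. t m j) + (\<Sum>j\<in>{l<..d}. t m j))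
                                     - ((\<Sum>i\<in>{0<..l}. t i m) + (\<Sum>i\<in>{l<..d}. t i m))"
        using split1[of 0 l d "\<lambda>j. t m j"] split1[of 0 l d "\<lambda>i. t i m"] that by simp
    qed
    also have "\<dots> = (\<Sum>m\<in>{0<..l}. \<Sum>j\<in>{0<..l}. t m j) + A l - (\<Sum>m\<in>{0<..l}. \<Sum>i\<in>{0<..l}. t i m) - B l"
      unfolding A_def B_def by (simp add: sum.distrib sum_subtractf)
    also have "(\<Sum>m\<in>{0<..l}. \<Sum>i\<in>{0<..l}. t i m) = (\<Sum>m\<in>{0<..l}. \<Sum>j\<in>{0<..l}. t m j)"
      by (rule sum.swap)
    finally show ?thesis by simp
  qed
  have tb: "0 \<le> t i j \<and> t i j \<le> 3/2" if "0 < i" "i \<le> d" "0 < j" "j \<le> d" for i j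
    using ht that by auto
  have Ab: "0 \<le> A l \<and> A l \<le> 3/2 * real l * (real d - real l)"
  proof
    show "0 \<le> A l" unfolding A_def using tb ld by (intro sum_nonneg) auto
    have "A l \<le> (\<Sum>m\<in>{0<..l}. \<Sum>j\<in>{l<..d}. (3/2::real))" unfolding A_def using tb ld by (intro sum_mono) auto
    also have "\<dots> = 3/2 * real l * (real d - real l)" using ld by (simp add: of_nat_diff)
    finally show "A l \<le> 3/2 * real l * (real d - real l)" .
  qed
  have Bb: "0 \<le> B l \<and> B l \<le> 3/2 * real l * (real d - real l)"
  proof
    show "0 \<le> B l" unfolding B_def using tb ld by (intro sum_nonneg) auto
    have "B l \<le> (\<Sum>m\<in>{0<..l}. \<Sum>j\<in>{l<..d}. (3/2::real))" unfolding B_def using tb ld by (intro sum_mono) auto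
    also have "\<dots> = 3/2 * real l * (real d - real l)" using ld by (simp add: of_nat_diff)
    finally show "B l \<le> 3/2 * real l * (real d - real l)" .
  qed
  have hsm: "- (real a / 2) \<le> s m \<and> s m \<le> real a / 2 \<and> -1 \<le> r m \<and> r m \<le> 0" if "0 < m" "m \<le> d" for m
  proof -
    have "m \<in> {1..d}" using that by auto
    then show ?thesis using hs by blast
  qed
  have srl: "(\<Sum>m\<in>{0<..l}. s m + r m) \<ge> (\<Sum>m\<in>{0<..l}. - (real a / 2) - 1)"
  proof (intro sum_mono)
    fix m assume "m \<in> {0<..l}"
    then show "- (real a / 2) - 1 \<le> s m + r m" using hsm[of m] ld by auto
  qed
  have srl2: "(\<Sum>m\<in>{0<..l}. - (real a / 2) - 1) = - (real a / 2 + 1) * real l" by simp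
  have PPl: "PP a d v l = (\<Sum>m\<in>{0<..l}. v m) + (3/2) * real l * (real d - real l) + (real a / 2) * real l" for l
    unfolding PP_def ivl1 ..
  show "PP a d v l \<ge> - real l"
  proof -
    have "(\<Sum>m\<in>{0<..l}. v m) \<ge> - 3/2 * real l * (real d - real l) - (real a / 2 + 1) * real l"
      using pre[OF ld] Ab Bb srl srl2 by linarith
    then show ?thesis unfolding PPl by (simp add: algebra_simps)
  qed
  show "PP a d v d - PP a d v l \<le> (real d - real l) * real a"
  proof -
    have Ad: "A d = 0" "B d = 0" unfolding A_def B_def by auto
    have X1: "(\<Sum>m\<in>{0<..d}. v m) = (\<Sum>m\<in>{0<..l}. v m) + (\<Sum>m\<in>{l<..d}. v m)"
      using split1[of 0 l d v] ld by simp
    have X2: "(\<Sum>m\<in>{0<..d}. s m + r m) = (\<Sum>m\<in>{0<..l}. s m + r m) + (\<Sum>m\<in>{l<..d}. s m + r m)"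
      using split1[of 0 l d "\<lambda>m. s m + r m"] ld by simp
    have "(\<Sum>m\<in>{l<..d}. s m + r m) \<le> (\<Sum>m\<in>{l<..d}. real a / 2)"
    proof (intro sum_mono)
      fix m assume "m \<in> {l<..d}"
      then show "s m + r m \<le> real a / 2" using hsm[of m] by auto
    qed
    also have "(\<Sum>m\<in>{l<..d}. real a / 2) = real a / 2 * (real d - real l)" by (rule constsum[OF ld])
    finally have X3: "(\<Sum>m\<in>{l<..d}. s m + r m) \<le> real a / 2 * (real d - real l)" .
    have X4: "(\<Sum>m\<in>{0<..d}. v m) = A d - B d + (\<Sum>m\<in>{0<..d}. s m + r m)" using pre[of d] by simp
    have "(\<Sum>m\<in>{l<..d}. v m) \<le> 3/2 * real l * (real d - real l) + real a / 2 * (real d - real l)"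
      using X1 X2 X3 X4 Ad pre[OF ld] Ab Bb by linarith
    moreover have "PP a d v d - PP a d v l = (\<Sum>m\<in>{l<..d}. v m) - 3/2 * real l * (real d - real l) + real a / 2 * (real d - real l)"
      unfolding PPl using split1[of 0 l d v] ld by (simp add: field_simps)
    ultimately show ?thesis by (simp add: field_simps)
  qed
qed


lemma lemma3p6_aux:
  fixes a d :: nat and mu :: real and chi :: "nat \<Rightarrow> int"
  assumes "dominant d chi"
    and "in_V a d (shifted d mu chi)"
  shows "\<forall>l\<in>{1..d}. p_l a d mu chi l \<ge> p_chi a d mu chi \<and>
           (l > e_of a d mu chi \<longrightarrow> p_l a d mu chi l > p_chi a d mu chi)"
proof -
  define v where "v = shifted d mu chi"
  have pl: "p_l a d mu chi l = PP a d v l" for l unfolding p_l_def PP_def v_def ..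
  have vs: "v i \<le> v j" if "0 < i" "i \<le> j" "j \<le> d" for i j
  proof -
    have "chi i \<le> chi j" using assms(1) that unfolding dominant_def by auto
    then have "real_of_int (chi i) \<le> real_of_int (chi j)" by simp
    moreover have "(2 * real i - real d - 1) / 2 \<le> (2 * real j - real d - 1) / (2::real)"
      using that by (intro divide_right_mono) auto
    ultimately show ?thesis unfolding v_def shifted_def by linarith
  qed
  have iv: "in_V a d v" using assms(2) unfolding v_def .
  have lowb: "PP a d v l \<ge> - real l" if "l \<le> d" for l using inV_bounds(1)[OF iv that] .
  have upb: "PP a d v d - PP a d v l \<le> (real d - real l) * real a" if "l \<le> d" for l using inV_bounds(2)[OF iv that] .
  have PPv: "(\<Sum>m\<in>{0<..k}. v m) = PP a d v k - 3/2 * real k * (real d - real k) - real a / 2 * real k" for k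
    unfolding PP_def ivl1 by simp
  define M where "M = Min (PP a d v ` {0..d})"
  define E where "E = {l \<in> {0..d}. PP a d v l = M}"
  define e where "e = Max E"
  have "M \<in> PP a d v ` {0..d}" unfolding M_def by (intro Min_in) auto
  then have Ene: "E \<noteq> {}" unfolding E_def by auto
  have finE: "finite E" unfolding E_def by simp
  have "e \<in> E" unfolding e_def using Ene finE by (intro Max_in) auto
  then have ed: "e \<le> d" and PPe: "PP a d v e = M" unfolding E_def by auto
  have Mle: "M \<le> PP a d v l" if "l \<le> d" for l unfolding M_def using that by (intro Min_le) auto
  have Mlt: "M < PP a d v l" if "e < l" "l \<le> d" for l
  proof (rule ccontr)
    assume "\<not> M < PP a d v l"
    then have "l \<in> E" using Mle[OF that(2)] that unfolding E_def by auto
    then have "l \<le> e" unfolding e_def using finE by simp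
    then show False using that by simp
  qed
  define y1 where "y1 m = v m + 3/2 * (real d - real e)" for m
  have K1: "(\<Sum>m\<in>{0<..k}. y1 m) + 3/2 * (real k - real 0) * (real e - real k) = PP a d v k - real a / 2 * real k" for k
  proof -
    have "(\<Sum>m\<in>{0<..k}. y1 m) = (\<Sum>m\<in>{0<..k}. v m) + 3/2 * (real d - real e) * real k"
      unfolding y1_def by (simp add: sum.distrib)
    then show ?thesis using PPv[of k] by (simp add: field_simps)
  qed
  have "\<exists>z cv. (\<forall>i j. 0 < j \<longrightarrow> j < i \<longrightarrow> i \<le> e \<longrightarrow> 0 \<le> z i j \<and> z i j \<le> 3/2) \<and>
     (\<forall>m\<in>{0<..e}. - ((real a + 2) / 2) \<le> cv m \<and> cv m \<le> - (real a / 2) \<and> y1 m = (\<Sum>j\<in>{0<..<m}. z m j) - (\<Sum>i\<in>{m<..e}. z i m) + cv m)"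
  proof (rule block)
    show "0 \<le> e" by simp
    show "(0::real) \<le> 3/2" by simp
    show "\<forall>i j. 0 < i \<longrightarrow> i \<le> j \<longrightarrow> j \<le> e \<longrightarrow> y1 i \<le> y1 j" using vs ed unfolding y1_def by auto
    show "\<forall>k. 0 \<le> k \<longrightarrow> k \<le> e \<longrightarrow> (real k - real 0) * - ((real a + 2) / 2) \<le> (\<Sum>m\<in>{0<..k}. y1 m) + 3/2 * (real k - real 0) * (real e - real k)"
    proof (intro allI impI)
      fix k assume "0 \<le> k" "k \<le> e"
      then have "PP a d v k \<ge> - real k" using lowb ed by simp
      then show "(real k - real 0) * - ((real a + 2) / 2) \<le> (\<Sum>m\<in>{0<..k}. y1 m) + 3/2 * (real k - real 0) * (real e - real k)"
        unfolding K1 by (simp add: field_simps)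
    qed
    show "\<forall>k. 0 \<le> k \<longrightarrow> k \<le> e \<longrightarrow> (\<Sum>m\<in>{0<..e}. y1 m) - ((\<Sum>m\<in>{0<..k}. y1 m) + 3/2 * (real k - real 0) * (real e - real k)) \<le> (real e - real k) * - (real a / 2)"
    proof (intro allI impI)
      fix k assume "0 \<le> k" "k \<le> e"
      then have "PP a d v e \<le> PP a d v k" using Mle PPe ed by simp
      moreover have "(\<Sum>m\<in>{0<..e}. y1 m) = PP a d v e - real a / 2 * real e" using K1[of e] by simp
      ultimately show "(\<Sum>m\<in>{0<..e}. y1 m) - ((\<Sum>m\<in>{0<..k}. y1 m) + 3/2 * (real k - real 0) * (real e - real k)) \<le> (real e - real k) * - (real a / 2)"
        unfolding K1 by (simp add: field_simps)
    qed
  qed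
  then obtain z1 cv1 where z1: "\<forall>i j. 0 < j \<longrightarrow> j < i \<longrightarrow> i \<le> e \<longrightarrow> 0 \<le> z1 i j \<and> z1 i j \<le> 3/2"
    and cv1: "\<forall>m\<in>{0<..e}. - ((real a + 2) / 2) \<le> cv1 m \<and> cv1 m \<le> - (real a / 2) \<and> y1 m = (\<Sum>j\<in>{0<..<m}. z1 m j) - (\<Sum>i\<in>{m<..e}. z1 i m) + cv1 m"
    by blast
  define eps where "eps = (if e < d then Min ((\<lambda>k. (PP a d v k - PP a d v e) / (real k - real e)) ` {e<..d}) else 0)"
  have epspos: "eps > 0" if "e < d"
  proof -
    have eq: "eps = Min ((\<lambda>k. (PP a d v k - PP a d v e) / (real k - real e)) ` {e<..d})"
      unfolding eps_def using that by simp
    have "eps \<in> (\<lambda>k. (PP a d v k - PP a d v e) / (real k - real e)) ` {e<..d}"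
      unfolding eq using that by (intro Min_in) auto
    then obtain k where "k \<in> {e<..d}" "eps = (PP a d v k - PP a d v e) / (real k - real e)" by auto
    then show ?thesis using Mlt[of k] PPe by simp
  qed
  have epsle: "eps * (real k - real e) \<le> PP a d v k - PP a d v e" if "e \<le> k" "k \<le> d" for k
  proof (cases "k = e")
    case True then show ?thesis by simp
  next
    case False
    then have ek: "e < k" "e < d" using that by auto
    have eq: "eps = Min ((\<lambda>k. (PP a d v k - PP a d v e) / (real k - real e)) ` {e<..d})"
      unfolding eps_def using ek by simp
    have "eps \<le> (PP a d v k - PP a d v e) / (real k - real e)"
      unfolding eq using ek that by (intro Min_le) auto
    then show ?thesis using ek by (simp add: pos_le_divide_eq)
  qed
  define y2 where "y2 m = v m - 3/2 * real e" for m
  have K2: "(\<Sum>m\<in>{e<..k}. y2 m) + 3/2 * (real k - real e) * (real d - real k) = PP a d v k - PP a d v e - real a / 2 * (real k - real e)"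
    if "e \<le> k" for k
  proof -
    have "(\<Sum>m\<in>{0<..k}. v m) = (\<Sum>m\<in>{0<..e}. v m) + (\<Sum>m\<in>{e<..k}. v m)"
      using split1[of 0 e k v] that by simp
    moreover have "(\<Sum>m\<in>{e<..k}. y2 m) = (\<Sum>m\<in>{e<..k}. v m) - 3/2 * real e * (real k - real e)"
      unfolding y2_def using that by (simp add: sum_subtractf of_nat_diff)
    ultimately show ?thesis using PPv[of k] PPv[of e] by (simp add: field_simps)
  qed
  have "\<exists>z cv. (\<forall>i j. e < j \<longrightarrow> j < i \<longrightarrow> i \<le> d \<longrightarrow> 0 \<le> z i j \<and> z i j \<le> 3/2) \<and>
     (\<forall>m\<in>{e<..d}. - (real a / 2) + eps \<le> cv m \<and> cv m \<le> real a / 2 \<and> y2 m = (\<Sum>j\<in>{e<..<m}. z m j) - (\<Sum>i\<in>{m<..d}. z i m) + cv m)"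
  proof (rule block)
    show "e \<le> d" by fact
    show "(0::real) \<le> 3/2" by simp
    show "\<forall>i j. e < i \<longrightarrow> i \<le> j \<longrightarrow> j \<le> d \<longrightarrow> y2 i \<le> y2 j"
    proof (intro allI impI)
      fix i j assume ij: "e < i" "i \<le> j" "j \<le> d"
      then have "v i \<le> v j" using vs[of i j] by simp
      then show "y2 i \<le> y2 j" unfolding y2_def by simp
    qed
    show "\<forall>k. e \<le> k \<longrightarrow> k \<le> d \<longrightarrow> (real k - real e) * (- (real a / 2) + eps) \<le> (\<Sum>m\<in>{e<..k}. y2 m) + 3/2 * (real k - real e) * (real d - real k)"
    proof (intro allI impI)
      fix k assume k: "e \<le> k" "k \<le> d"
      show "(real k - real e) * (- (real a / 2) + eps) \<le> (\<Sum>m\<in>{e<..k}. y2 m) + 3/2 * (real k - real e) * (real d - real k)"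
        unfolding K2[OF k(1)] using epsle[OF k] by (simp add: field_simps)
    qed
    show "\<forall>k. e \<le> k \<longrightarrow> k \<le> d \<longrightarrow> (\<Sum>m\<in>{e<..d}. y2 m) - ((\<Sum>m\<in>{e<..k}. y2 m) + 3/2 * (real k - real e) * (real d - real k)) \<le> (real d - real k) * (real a / 2)"
    proof (intro allI impI)
      fix k assume k: "e \<le> k" "k \<le> d"
      have "(\<Sum>m\<in>{e<..d}. y2 m) = PP a d v d - PP a d v e - real a / 2 * (real d - real e)" using K2[OF ed] by simp
      then show "(\<Sum>m\<in>{e<..d}. y2 m) - ((\<Sum>m\<in>{e<..k}. y2 m) + 3/2 * (real k - real e) * (real d - real k)) \<le> (real d - real k) * (real a / 2)"
        unfolding K2[OF k(1)] using upb[OF k(2)] by (simp add: field_simps)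
    qed
  qed
  then obtain z2 cv2 where z2: "\<forall>i j. e < j \<longrightarrow> j < i \<longrightarrow> i \<le> d \<longrightarrow> 0 \<le> z2 i j \<and> z2 i j \<le> 3/2"
    and cv2: "\<forall>m\<in>{e<..d}. - (real a / 2) + eps \<le> cv2 m \<and> cv2 m \<le> real a / 2 \<and> y2 m = (\<Sum>j\<in>{e<..<m}. z2 m j) - (\<Sum>i\<in>{m<..d}. z2 i m) + cv2 m"
    by blast
  define cc where "cc i j = (if i \<le> e then z1 i j else if e < j then z2 i j else 0)" for i j
  define c where "c m = (if m \<le> e then cv1 m else cv2 m)" for m
  have dec: "e_decomp a d v e"
    unfolding e_decomp_def
  proof (intro exI[of _ cc] exI[of _ c] conjI allI impI ballI)
    fix i j :: nat assume "1 \<le> j" "j < i" "i \<le> d"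
    then show "0 \<le> cc i j" "cc i j \<le> 3/2" using z1 z2 unfolding cc_def by auto
  next
    fix i assume i: "i \<in> {1..d}"
    { assume "i \<le> e"
      then show "- ((real a + 2) / 2) \<le> c i" "c i \<le> - (real a / 2)" using cv1 i unfolding c_def by auto }
    { assume ei: "e < i"
      then have "eps > 0" using epspos i by auto
      then show "- (real a / 2) < c i" "c i \<le> real a / 2" using cv2 i ei unfolding c_def by force+ }
  next
    fix m assume m: "m \<in> {1..d}"
    show "v m = (\<Sum>j\<in>{1..<m}. if (m \<le> e) = (j \<le> e) then cc m j else 0)
      - (\<Sum>i\<in>{m<..d}. if (m \<le> e) = (i \<le> e) then cc i m else 0)
      + (if m \<le> e then - (3/2) * (real d - real e) else (3/2) * real e)
      + c m"
    proof (cases "m \<le> e")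
      case True
      have a1: "(\<Sum>j\<in>{1..<m}. if (m \<le> e) = (j \<le> e) then cc m j else 0) = (\<Sum>j\<in>{0<..<m}. z1 m j)"
        unfolding ivl2 using True by (intro sum.cong refl) (auto simp: cc_def)
      have "(\<Sum>i\<in>{m<..d}. if (m \<le> e) = (i \<le> e) then cc i m else 0)
          = (\<Sum>i\<in>{m<..e}. if (m \<le> e) = (i \<le> e) then cc i m else 0) + (\<Sum>i\<in>{e<..d}. if (m \<le> e) = (i \<le> e) then cc i m else 0)"
        using split1[of m e d] True ed by simp
      also have "(\<Sum>i\<in>{m<..e}. if (m \<le> e) = (i \<le> e) then cc i m else 0) = (\<Sum>i\<in>{m<..e}. z1 i m)"
        using True by (intro sum.cong refl) (auto simp: cc_def)
      also have "(\<Sum>i\<in>{e<..d}. if (m \<le> e) = (i \<le> e) then cc i m else 0) = 0"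
        using True by (intro sum.neutral) auto
      finally have a2: "(\<Sum>i\<in>{m<..d}. if (m \<le> e) = (i \<le> e) then cc i m else 0) = (\<Sum>i\<in>{m<..e}. z1 i m)" by simp
      have "y1 m = (\<Sum>j\<in>{0<..<m}. z1 m j) - (\<Sum>i\<in>{m<..e}. z1 i m) + cv1 m" using cv1 m True by auto
      then show ?thesis unfolding a1 a2 using True unfolding y1_def c_def by simp
    next
      case False
      have "(\<Sum>j\<in>{1..<m}. if (m \<le> e) = (j \<le> e) then cc m j else 0)
          = (\<Sum>j\<in>{0<..e}. if (m \<le> e) = (j \<le> e) then cc m j else 0) + (\<Sum>j\<in>{e<..<m}. if (m \<le> e) = (j \<le> e) then cc m j else 0)"
        unfolding ivl2 using split2[of 0 e m] False by simp
      also have "(\<Sum>j\<in>{0<..e}. if (m \<le> e) = (j \<le> e) then cc m j else 0) = 0"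
        using False by (intro sum.neutral) auto
      also have "(\<Sum>j\<in>{e<..<m}. if (m \<le> e) = (j \<le> e) then cc m j else 0) = (\<Sum>j\<in>{e<..<m}. z2 m j)"
        using False by (intro sum.cong refl) (auto simp: cc_def)
      finally have a1: "(\<Sum>j\<in>{1..<m}. if (m \<le> e) = (j \<le> e) then cc m j else 0) = (\<Sum>j\<in>{e<..<m}. z2 m j)" by simp
      have a2: "(\<Sum>i\<in>{m<..d}. if (m \<le> e) = (i \<le> e) then cc i m else 0) = (\<Sum>i\<in>{m<..d}. z2 i m)"
        using False by (intro sum.cong refl) (auto simp: cc_def)
      have "y2 m = (\<Sum>j\<in>{e<..<m}. z2 m j) - (\<Sum>i\<in>{m<..d}. z2 i m) + cv2 m" using cv2 m False by auto
      then show ?thesis unfolding a1 a2 using False unfolding y2_def c_def by simp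
    qed
  qed
  have uniq: "e' = e" if "e' \<le> d \<and> e_decomp a d v e'" for e'
  proof -
    have h: "\<forall>l\<le>d. PP a d v e' \<le> PP a d v l \<and> (e' < l \<longrightarrow> PP a d v e' < PP a d v l)"
      using decomp_ineq[OF conjunct2[OF that] conjunct1[OF that]] .
    show ?thesis
    proof (rule ccontr)
      assume "e' \<noteq> e"
      then consider "e' < e" | "e < e'" by linarith
      then show False
      proof cases
        case 1
        have "PP a d v e' < PP a d v e" using spec[OF h, of e] ed 1 by simp
        moreover have "M \<le> PP a d v e'" using Mle that by simp
        ultimately show ?thesis using PPe by simp
      next
        case 2
        have "PP a d v e' \<le> PP a d v e" using spec[OF h, of e] ed by simp
        moreover have "M < PP a d v e'" using Mlt[of e'] 2 that by simp
        ultimately show ?thesis using PPe by simp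
      qed
    qed
  qed
  have eof: "e_of a d mu chi = e"
    unfolding e_of_def v_def[symmetric]
  proof (rule the_equality)
    show "e \<le> d \<and> e_decomp a d v e" using ed dec by simp
  next
    fix e' assume "e' \<le> d \<and> e_decomp a d v e'"
    then show "e' = e" by (rule uniq)
  qed
  have pchi: "p_chi a d mu chi = PP a d v e" unfolding p_chi_def eof pl ..
  show ?thesis
  proof
    fix l assume "l \<in> {1..d}"
    then have ld: "l \<le> d" by simp
    have A: "p_chi a d mu chi \<le> p_l a d mu chi l" unfolding pchi pl using Mle[OF ld] PPe by simp
    have B: "e_of a d mu chi < l \<longrightarrow> p_chi a d mu chi < p_l a d mu chi l"
      unfolding pchi pl eof using Mlt ld PPe by simp
    show "p_chi a d mu chi \<le> p_l a d mu chi l \<and> (e_of a d mu chi < l \<longrightarrow> p_chi a d mu chi < p_l a d mu chi l)"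
      using A B by blast
  qed
qed


theorem lemma3p6:
  fixes a d :: nat and mu :: real and chi :: "nat \<Rightarrow> int"
  assumes "dominant d chi"
    and "in_V a d (shifted d mu chi)"
  shows "\<forall>l\<in>{1..d}. p_l a d mu chi l \<ge> p_chi a d mu chi \<and>
           (l > e_of a d mu chi \<longrightarrow> p_l a d mu chi l > p_chi a d mu chi)"
  using assms by (rule lemma3p6_aux)

end
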